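(* Let $u$ and $v$ be non-constant entire functions such that ${\rm Aut}(v)$ is a subgroup of ${\rm Aut}(u)$. Then there exists a function $h$, holomorphic on $v(\mathbb{C})$, such that $u(z)=h(v(z))$ for all $z\in\mathbb{C}$.
   Context: For a non-constant entire function $f$, an automorphic function of $f$ is a (generally multivalued) analytic function $\phi$, or a single-valued branch of one on a domain, satisfying the automorphic equation $f(\phi(z))=f(z)$; these are the branches of $f^{-1}\circ f$. ${\rm Aut}(f)$ denotes the set of all automorphic functions of $f$, which is a group under composition (Shimizu's automorphic group). For any $z,w$ with $f(z)=f(w)$ there is $\phi\in{\rm Aut}(f)$ with $\phi(z)=w$. "${\rm Aut}(v)$ is a subgroup of ${\rm Aut}(u)$" means every automorphic function of $v$ is an automorphic function of $u$. *)

theory Defs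
  imports "HOL-Complex_Analysis.Complex_Analysis"
begin

definition automorphic_branch ::
  "(complex \<Rightarrow> complex) \<Rightarrow> complex set \<Rightarrow> (complex \<Rightarrow> complex) \<Rightarrow> bool" where
  "automorphic_branch f D \<phi> \<longleftrightarrow>
     open D \<and> connected D \<and> D \<noteq> {} \<and> \<phi> holomorphic_on D \<and> (\<forall>z\<in>D. f (\<phi> z) = f z)"

text \<open>Aut(v) is a subgroup of Aut(u): every automorphic function of v is one of u.\<close>
definition Aut_sub :: "(complex \<Rightarrow> complex) \<Rightarrow> (complex \<Rightarrow> complex) \<Rightarrow> bool" where
  "Aut_sub v u \<longleftrightarrow> (\<forall>D \<phi>. automorphic_branch v D \<phi> \<longrightarrow> automorphic_branch u D \<phi>)"

end

theory Submission
  imports Defs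
begin

lemma reg_eq:
  fixes u v :: "complex \<Rightarrow> complex"
  assumes hv: "v holomorphic_on UNIV" and A: "Aut_sub v u"
    and vzw: "v z = v w" and dw: "deriv v w \<noteq> 0"
  shows "u z = u w"
proof -
  obtain r where r: "r > 0" "inj_on v (ball w r)"
    using has_complex_derivative_locally_injective[OF hv, of w] dw by auto
  have hvb: "v holomorphic_on ball w r" using hv holomorphic_on_subset by blast
  obtain g where g: "g holomorphic_on v ` ball w r" "\<And>\<zeta>. \<zeta> \<in> ball w r \<Longrightarrow> g (v \<zeta>) = \<zeta>"
    using holomorphic_has_inverse[OF hvb open_ball r(2)] by metis
  define V where "V = v ` ball w r"
  have oV: "open V" unfolding V_def using open_mapping_thm3[OF hvb open_ball r(2)] .
  have zV: "z \<in> v -` V" using vzw r(1) unfolding V_def by auto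
  have "continuous_on UNIV v" using hv holomorphic_on_imp_continuous_on by blast
  then have "open (v -` V)" using oV open_vimage by blast
  then obtain s where s: "s > 0" "ball z s \<subseteq> v -` V" using zV openE by blast
  have br: "automorphic_branch v (ball z s) (g \<circ> v)"
    unfolding automorphic_branch_def
  proof (intro conjI)
    show "g \<circ> v holomorphic_on ball z s"
      apply (rule holomorphic_on_compose_gen[where t=V])
      using hv holomorphic_on_subset g(1) s(2) unfolding V_def by auto
    show "\<forall>\<zeta>\<in>ball z s. v ((g \<circ> v) \<zeta>) = v \<zeta>"
    proof
      fix \<zeta> assume "\<zeta> \<in> ball z s"
      then have "v \<zeta> \<in> V" using s by auto
      then obtain \<xi> where "\<xi> \<in> ball w r" "v \<zeta> = v \<xi>" unfolding V_def by auto
      then show "v ((g \<circ> v) \<zeta>) = v \<zeta>" using g(2) by simp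
    qed
  qed (use s in auto)
  then have "automorphic_branch u (ball z s) (g \<circ> v)" using A unfolding Aut_sub_def by blast
  then have "u (g (v z)) = u z" unfolding automorphic_branch_def using s by auto
  moreover have "g (v z) = w" using g(2) vzw r(1) by (metis centre_in_ball)
  ultimately show ?thesis by simp
qed

lemma deriv_not_zero:
  fixes v :: "complex \<Rightarrow> complex"
  assumes hv: "v holomorphic_on UNIV" and nc: "\<not> (\<exists>c. \<forall>z. v z = c)"
  shows "\<exists>\<beta>. deriv v \<beta> \<noteq> 0"
proof (rule ccontr)
  assume neg: "\<not> (\<exists>\<beta>. deriv v \<beta> \<noteq> 0)"
  then have "\<And>x. (v has_field_derivative 0) (at x within UNIV)"
  proof -
    fix x
    have "v field_differentiable at x" using hv holomorphic_on_imp_differentiable_at by blast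
    then have "(v has_field_derivative deriv v x) (at x)" using DERIV_deriv_iff_field_differentiable by blast
    then show "(v has_field_derivative 0) (at x within UNIV)" using neg by simp
  qed
  then have "\<exists>c. \<forall>x\<in>UNIV. v x = c" by (intro has_field_derivative_zero_constant) auto
  then show False using nc by auto
qed

lemma crit_isolated:
  fixes v :: "complex \<Rightarrow> complex"
  assumes hv: "v holomorphic_on UNIV" and nc: "\<not> (\<exists>c. \<forall>z. v z = c)"
  shows "\<exists>\<rho>>0. \<forall>\<zeta>\<in>ball z0 \<rho> - {z0}. deriv v \<zeta> \<noteq> 0"
proof -
  have hd: "deriv v holomorphic_on UNIV" using hv holomorphic_deriv by blast
  show ?thesis
  proof (cases "deriv v z0 = 0")
    case True
    obtain \<beta> where "deriv v \<beta> \<noteq> 0" using deriv_not_zero[OF hv nc] by blast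
    then obtain r where r: "0 < r" "\<And>z. z \<in> ball z0 r - {z0} \<Longrightarrow> deriv v z \<noteq> 0"
      by (rule isolated_zeros[OF hd open_UNIV connected_UNIV UNIV_I True UNIV_I]) blast+
    show ?thesis using r by blast
  next
    case False
    have "continuous_on UNIV (deriv v)" using hd holomorphic_on_imp_continuous_on by blast
    then have "open (deriv v -` (- {0}))" using open_vimage by blast
    moreover have "z0 \<in> deriv v -` (- {0})" using False by simp
    ultimately obtain e where e: "e > 0" "ball z0 e \<subseteq> deriv v -` (- {0})" using openE by blast
    have "\<forall>\<zeta>\<in>ball z0 e - {z0}. deriv v \<zeta> \<noteq> 0" using e(2) by blast
    then show ?thesis using e(1) by blast
  qed
qed

lemma fiber_isolated:
  fixes v :: "complex \<Rightarrow> complex"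
  assumes hv: "v holomorphic_on UNIV" and nc: "\<not> (\<exists>c. \<forall>z. v z = c)"
  shows "\<exists>t>0. \<forall>\<zeta>\<in>ball z t - {z}. v \<zeta> \<noteq> v z"
proof -
  have h: "(\<lambda>\<zeta>. v \<zeta> - v z) holomorphic_on UNIV" using hv by (intro holomorphic_intros) auto
  obtain \<beta> where "v \<beta> \<noteq> v z" using nc by blast
  then have "(\<lambda>\<zeta>. v \<zeta> - v z) \<beta> \<noteq> 0" by simp
  from isolated_zeros[OF h open_UNIV connected_UNIV _ _ _ this]
  obtain t where "t > 0" "\<And>\<zeta>. \<zeta> \<in> ball z t - {z} \<Longrightarrow> v \<zeta> - v z \<noteq> 0" by auto
  then show ?thesis by auto
qed

lemma ucont:
  fixes u :: "complex \<Rightarrow> complex"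
  assumes hu: "u holomorphic_on UNIV" and e: "e > 0"
  shows "\<exists>d>0. \<forall>\<zeta>. dist \<zeta> x < d \<longrightarrow> dist (u \<zeta>) (u x) < e"
proof -
  have "continuous_on UNIV u" using hu holomorphic_on_imp_continuous_on by blast
  then show ?thesis using e unfolding continuous_on_iff by blast
qed

lemma nonconst_on:
  fixes v :: "complex \<Rightarrow> complex"
  assumes nc: "\<not> (\<exists>c. \<forall>z. v z = c)"
  shows "\<not> v constant_on UNIV"
  using nc unfolding constant_on_def by blast

lemma gen_eq:
  fixes u v :: "complex \<Rightarrow> complex"
  assumes hu: "u holomorphic_on UNIV" and hv: "v holomorphic_on UNIV"
    and nc: "\<not> (\<exists>c. \<forall>z. v z = c)" and A: "Aut_sub v u"
    and vzw: "v z = v w"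
  shows "u z = u w"
proof (rule ccontr)
  assume ne: "u z \<noteq> u w"
  define e where "e = norm (u z - u w)"
  have e: "e > 0" using ne unfolding e_def by simp
  obtain d1 where d1: "d1 > 0" "\<And>\<zeta>. dist \<zeta> w < d1 \<Longrightarrow> dist (u \<zeta>) (u w) < e/2"
    using ucont[OF hu, of "e/2" w] e by auto
  obtain d2 where d2: "d2 > 0" "\<And>\<zeta>. dist \<zeta> z < d2 \<Longrightarrow> dist (u \<zeta>) (u z) < e/2"
    using ucont[OF hu, of "e/2" z] e by auto
  obtain r0 where r0: "r0 > 0" "\<forall>\<zeta>\<in>ball w r0 - {w}. deriv v \<zeta> \<noteq> 0"
    using crit_isolated[OF hv nc, of w] by blast
  define r where "r = min d1 r0"
  have r: "r > 0" using d1 r0 unfolding r_def by simp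
  define V where "V = v ` ball w r"
  have oV: "open V" unfolding V_def
    by (rule open_mapping_thm[OF hv open_UNIV connected_UNIV open_ball subset_UNIV nonconst_on[OF nc]])
  have zV: "z \<in> v -` V" using vzw r unfolding V_def by auto
  have "continuous_on UNIV v" using hv holomorphic_on_imp_continuous_on by blast
  then have "open (v -` V)" using oV open_vimage by blast
  then obtain s where s: "s > 0" "ball z s \<subseteq> v -` V" using zV openE by blast
  obtain t where t: "t > 0" "\<forall>\<zeta>\<in>ball z t - {z}. v \<zeta> \<noteq> v z"
    using fiber_isolated[OF hv nc, of z] by blast
  define m where "m = min (min d2 s) t / 2"
  have m: "m > 0" "m < d2" "m < s" "m < t" using d2 s t unfolding m_def by auto
  define z' where "z' = z + of_real m"
  have dz: "dist z' z = m" unfolding z'_def using m by (simp add: dist_norm)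
  have z'1: "z' \<in> ball z s" "z' \<in> ball z t - {z}" using dz m by (auto simp: dist_commute)
  then have "v z' \<in> V" using s by auto
  then obtain w' where w': "w' \<in> ball w r" "v w' = v z'" unfolding V_def by auto
  have "v z' \<noteq> v z" using t z'1 by blast
  then have "w' \<noteq> w" using w' vzw by auto
  then have "deriv v w' \<noteq> 0" using r0 w' unfolding r_def by auto
  then have uu: "u z' = u w'" using reg_eq[OF hv A, of z' w'] w' by simp
  have a1: "dist (u z') (u z) < e/2" using d2 dz m by auto
  have "dist w' w < d1" using w' unfolding r_def by (simp add: dist_commute)
  then have a2: "dist (u w') (u w) < e/2" using d1 by auto
  have "e = dist (u z) (u w)" unfolding e_def by (simp add: dist_norm)
  also have "\<dots> \<le> dist (u z') (u z) + dist (u w') (u w)"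
    using uu dist_triangle3[of "u z" "u w" "u z'"] by (simp add: dist_commute)
  also have "\<dots> < e" using a1 a2 by simp
  finally show False by simp
qed

lemma reg_diff:
  fixes u v h :: "complex \<Rightarrow> complex"
  assumes hu: "u holomorphic_on UNIV" and hv: "v holomorphic_on UNIV"
    and hvu: "\<And>z. h (v z) = u z" and dz: "deriv v \<zeta> \<noteq> 0"
  shows "h field_differentiable at (v \<zeta>)"
proof -
  obtain r where r: "r > 0" "inj_on v (ball \<zeta> r)"
    using has_complex_derivative_locally_injective[OF hv, of \<zeta>] dz by auto
  have hvb: "v holomorphic_on ball \<zeta> r" using hv holomorphic_on_subset by blast
  obtain g where g: "g holomorphic_on v ` ball \<zeta> r" "\<And>\<xi>. \<xi> \<in> ball \<zeta> r \<Longrightarrow> g (v \<xi>) = \<xi>"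
    using holomorphic_has_inverse[OF hvb open_ball r(2)] by metis
  define V where "V = v ` ball \<zeta> r"
  have oV: "open V" unfolding V_def using open_mapping_thm3[OF hvb open_ball r(2)] .
  have "(u \<circ> g) holomorphic_on V"
    apply (rule holomorphic_on_compose_gen[where t=UNIV])
    using g(1) hu unfolding V_def by auto
  then have "h holomorphic_on V"
  proof (rule holomorphic_transform)
    fix y assume "y \<in> V"
    then obtain \<xi> where "\<xi> \<in> ball \<zeta> r" "y = v \<xi>" unfolding V_def by auto
    then show "(u \<circ> g) y = h y" using g(2) hvu by simp
  qed
  moreover have "v \<zeta> \<in> V" unfolding V_def using r by simp
  ultimately show ?thesis using oV holomorphic_on_imp_differentiable_at by blast
qed

lemma h_cont:
  fixes u v h :: "complex \<Rightarrow> complex"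
  assumes hu: "u holomorphic_on UNIV" and hv: "v holomorphic_on UNIV"
    and nc: "\<not> (\<exists>c. \<forall>z. v z = c)"
    and hvu: "\<And>z. h (v z) = u z"
  shows "isCont h (v z)"
  unfolding continuous_at_eps_delta
proof (intro allI impI)
  fix e :: real assume e: "e > 0"
  obtain d where d: "d > 0" "\<And>\<zeta>. dist \<zeta> z < d \<Longrightarrow> dist (u \<zeta>) (u z) < e"
    using ucont[OF hu e, of z] by auto
  have oW: "open (v ` ball z d)"
    by (rule open_mapping_thm[OF hv open_UNIV connected_UNIV open_ball subset_UNIV nonconst_on[OF nc]])
  moreover have "v z \<in> v ` ball z d" using d by simp
  ultimately obtain d' where d': "d' > 0" "ball (v z) d' \<subseteq> v ` ball z d" using openE by blast
  have "\<forall>y. dist y (v z) < d' \<longrightarrow> dist (h y) (h (v z)) < e"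
  proof (intro allI impI)
    fix y assume "dist y (v z) < d'"
    then have "y \<in> v ` ball z d" using d' by (auto simp: dist_commute)
    then obtain \<xi> where "\<xi> \<in> ball z d" "y = v \<xi>" by auto
    then show "dist (h y) (h (v z)) < e" using d hvu by (simp add: dist_commute)
  qed
  then show "\<exists>d>0. \<forall>y. dist y (v z) < d \<longrightarrow> dist (h y) (h (v z)) < e" using d' by blast
qed

theorem lemma1:
  fixes u v :: "complex \<Rightarrow> complex"
  assumes "u holomorphic_on UNIV" and "v holomorphic_on UNIV"
    and "\<not> (\<exists>c. \<forall>z. u z = c)" and "\<not> (\<exists>c. \<forall>z. v z = c)"
    and "Aut_sub v u"
  shows "\<exists>h. h holomorphic_on (range v) \<and> (\<forall>z. u z = h (v z))"
proof -
  note hu = assms(1) and hv = assms(2) and nc = assms(4) and A = assms(5)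
  define h where "h y = u (SOME z. v z = y)" for y
  have hvu: "h (v z) = u z" for z
  proof -
    have "v (SOME z'. v z' = v z) = v z" by (rule someI) simp
    then show ?thesis unfolding h_def using gen_eq[OF hu hv nc A] by metis
  qed
  have diff: "h field_differentiable at (v z0)" for z0
  proof -
    obtain \<rho> where \<rho>: "\<rho> > 0" "\<forall>\<zeta>\<in>ball z0 \<rho> - {z0}. deriv v \<zeta> \<noteq> 0"
      using crit_isolated[OF hv nc, of z0] by blast
    define W where "W = v ` ball z0 \<rho>"
    have oW: "open W" unfolding W_def
      by (rule open_mapping_thm[OF hv open_UNIV connected_UNIV open_ball subset_UNIV nonconst_on[OF nc]])
    have cW: "continuous_on W h"
      using h_cont[OF hu hv nc hvu] unfolding W_def by (intro continuous_at_imp_continuous_on) blast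
    have "h holomorphic_on (W - {v z0})"
      unfolding holomorphic_on_def
    proof
      fix y assume "y \<in> W - {v z0}"
      then obtain \<zeta> where "\<zeta> \<in> ball z0 \<rho>" "y = v \<zeta>" "\<zeta> \<noteq> z0" unfolding W_def by blast
      then have "deriv v \<zeta> \<noteq> 0" using \<rho> by blast
      then have "h field_differentiable at y" using reg_diff[OF hu hv hvu] \<open>y = v \<zeta>\<close> by blast
      then show "h field_differentiable at y within (W - {v z0})"
        using field_differentiable_at_within by blast
    qed
    then have "h holomorphic_on W" using no_isolated_singularity[OF cW _ oW] by blast
    moreover have "v z0 \<in> W" unfolding W_def using \<rho> by simp
    ultimately show ?thesis using oW holomorphic_on_imp_differentiable_at by blast
  qed
  have "h holomorphic_on (range v)"
    unfolding holomorphic_on_def using diff field_differentiable_at_within by blast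
  then show ?thesis using hvu by metis
qed

end
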